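(* Let $\alpha\subset\mathbb{Z}^2$ be a finite set of dimension $2$ with some of its sides marked. Then $\alpha$ is a marked B-polygon if and only if, after an affine unimodular transformation of $\mathbb{Z}^2$ (carrying marked sides to marked sides), one of the following holds: (1) ($B_1$-marked polygon) there is a marked side $G$ of $\alpha$ such that exactly one point of $\alpha$ lies outside the line $\operatorname{aff}(G)$, and it has lattice distance $1$ from that line; (2) ($B_2$-marked polygon) $\alpha\subset\{x_1\in\{0,1\}\}$, and both $\alpha\cap\{x_1=0\}$ and $\alpha\cap\{x_1=1\}$ are marked sides of $\alpha$; (3) (flat border marked polygon) $\alpha=\{(0,0),(a,0),(0,1),(1,1)\}$ for some integer $a>1$, and the three sides $[(0,0),(a,0)]$, $[(a,0),(1,1)]$, $[(0,1),(0,0)]$ are marked.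
   Context: A side of a finite set $\alpha\subset\mathbb{Z}^2$ of dimension $2$ is a set $\alpha\cap G$ for an edge $G$ of the convex hull of $\alpha$. $\alpha$ with a chosen set of marked sides is a marked B-polygon if for every triangle $S$ (three affinely independent points) with vertices in $\alpha$ there is a marked side $G$ of $\alpha$ such that two vertices of $S$ lie in $G$ and the third vertex has lattice distance $1$ from the line $\operatorname{aff}(G)$ (lattice distance: absolute value of the primitive integral affine function vanishing on that line). *)

theory Defs
  imports "HOL-Analysis.Analysis"
begin

type_synonym lpt = "int \<times> int"

definition embed :: "lpt \<Rightarrow> real \<times> real" where
  "embed p = (real_of_int (fst p), real_of_int (snd p))"

definition lat_dim :: "lpt set \<Rightarrow> int" where
  "lat_dim A = aff_dim (embed ` A)"

definition is_side :: "lpt set \<Rightarrow> lpt set \<Rightarrow> bool" where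
  "is_side A S \<longleftrightarrow> (\<exists>G. G face_of convex hull (embed ` A) \<and> aff_dim G = 1 \<and>
       S = {p \<in> A. embed p \<in> G})"

definition iaff :: "int \<Rightarrow> int \<Rightarrow> int \<Rightarrow> lpt \<Rightarrow> int" where
  "iaff a b c p = a * fst p + b * snd p + c"

text \<open>q lies on the affine hull of S (for S with at least two points: the line aff(S)).\<close>
definition on_aff :: "lpt set \<Rightarrow> lpt \<Rightarrow> bool" where
  "on_aff S q \<longleftrightarrow> (\<forall>a b c. (\<forall>p\<in>S. iaff a b c p = 0) \<longrightarrow> iaff a b c q = 0)"

text \<open>p has lattice distance 1 from the line aff(S): the primitive integral affine
  function vanishing on that line has absolute value 1 at p.\<close>
definition ldist1 :: "lpt set \<Rightarrow> lpt \<Rightarrow> bool" where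
  "ldist1 S p \<longleftrightarrow> (\<exists>a b c. gcd a b = 1 \<and> (\<forall>q\<in>S. iaff a b c q = 0) \<and> \<bar>iaff a b c p\<bar> = 1)"

definition aff_indep3 :: "lpt \<Rightarrow> lpt \<Rightarrow> lpt \<Rightarrow> bool" where
  "aff_indep3 x y z \<longleftrightarrow>
     (fst y - fst x) * (snd z - snd x) - (snd y - snd x) * (fst z - fst x) \<noteq> 0"

definition marked_B :: "lpt set \<Rightarrow> lpt set set \<Rightarrow> bool" where
  "marked_B A M \<longleftrightarrow>
     (\<forall>x\<in>A. \<forall>y\<in>A. \<forall>z\<in>A. aff_indep3 x y z \<longrightarrow>
        (\<exists>G\<in>M. (x \<in> G \<and> y \<in> G \<and> ldist1 G z) \<or> (x \<in> G \<and> z \<in> G \<and> ldist1 G y)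
              \<or> (y \<in> G \<and> z \<in> G \<and> ldist1 G x)))"

definition aff_unimod :: "(lpt \<Rightarrow> lpt) \<Rightarrow> bool" where
  "aff_unimod T \<longleftrightarrow> (\<exists>a b c d e f :: int. \<bar>a * d - b * c\<bar> = 1 \<and>
       T = (\<lambda>p. (a * fst p + b * snd p + e, c * fst p + d * snd p + f)))"

definition B1_marked :: "lpt set \<Rightarrow> lpt set set \<Rightarrow> bool" where
  "B1_marked A M \<longleftrightarrow> (\<exists>G\<in>M. \<exists>p. {q \<in> A. \<not> on_aff G q} = {p} \<and> ldist1 G p)"

definition B2_marked :: "lpt set \<Rightarrow> lpt set set \<Rightarrow> bool" where
  "B2_marked A M \<longleftrightarrow> A \<subseteq> {p. fst p \<in> {0, 1}} \<and>
     {p \<in> A. fst p = 0} \<in> M \<and> {p \<in> A. fst p = 1} \<in> M"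

definition flat_border_marked :: "lpt set \<Rightarrow> lpt set set \<Rightarrow> bool" where
  "flat_border_marked A M \<longleftrightarrow> (\<exists>a::int. a > 1 \<and> A = {(0,0), (a,0), (0,1), (1,1)} \<and>
     {(0,0), (a,0)} \<in> M \<and> {(a,0), (1,1)} \<in> M \<and> {(0,1), (0,0)} \<in> M)"

end

theory Submission
  imports Defs
begin


definition det3 :: "lpt \<Rightarrow> lpt \<Rightarrow> lpt \<Rightarrow> int" where
  "det3 x y z = (fst y - fst x) * (snd z - snd x) - (snd y - snd x) * (fst z - fst x)"

definition alg_side :: "lpt set \<Rightarrow> lpt set \<Rightarrow> bool" where
  "alg_side A S \<longleftrightarrow> (\<exists>a b c. (a \<noteq> 0 \<or> b \<noteq> 0) \<and> (\<forall>p\<in>A. 0 \<le> iaff a b c p) \<and>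
      S = {p\<in>A. iaff a b c p = 0})"

lemma embed_inj: "embed p = embed q \<longleftrightarrow> p = q"
  by (cases p; cases q) (auto simp: embed_def)

lemma dim_triangle:
  assumes "finite A" "lat_dim A = 2"
  shows "\<exists>x\<in>A. \<exists>y\<in>A. \<exists>z\<in>A. det3 x y z \<noteq> 0"
proof (rule ccontr)
  assume H: "\<not> ?thesis"
  show False
  proof (cases "\<exists>x\<in>A. \<exists>y\<in>A. x \<noteq> y")
    case False
    then obtain x where "A \<subseteq> {x}" by blast
    hence "embed ` A \<subseteq> {embed x}" by blast
    hence "aff_dim (embed ` A) \<le> aff_dim {embed x}" by (rule aff_dim_subset)
    thus False using assms(2) by (simp add: lat_dim_def)
  next
    case True
    then obtain x y where xy: "x \<in> A" "y \<in> A" "x \<noteq> y" by blast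
    define d1 where "d1 = fst y - fst x"
    define d2 where "d2 = snd y - snd x"
    have dn: "d1 \<noteq> 0 \<or> d2 \<noteq> 0" using xy(3) unfolding d1_def d2_def by (auto simp: prod_eq_iff)
    define n :: "real \<times> real" where "n = (- real_of_int d2, real_of_int d1)"
    have n0: "n \<noteq> 0" using dn by (auto simp: n_def zero_prod_def)
    have "embed ` A \<subseteq> {v. n \<bullet> v = n \<bullet> embed x}"
    proof
      fix v assume "v \<in> embed ` A"
      then obtain p where p: "p \<in> A" "v = embed p" by blast
      have "det3 x y p = 0" using H p xy by auto
      hence "d1 * (snd p - snd x) - d2 * (fst p - fst x) = 0" by (simp add: det3_def d1_def d2_def)
      hence "real_of_int (d1 * (snd p - snd x) - d2 * (fst p - fst x)) = 0" by simp
      thus "v \<in> {v. n \<bullet> v = n \<bullet> embed x}" using p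
        by (simp add: n_def embed_def algebra_simps)
    qed
    hence "aff_dim (embed ` A) \<le> aff_dim {v. n \<bullet> v = n \<bullet> embed x}" by (rule aff_dim_subset)
    also have "\<dots> = 1" using n0 by simp
    finally show False using assms(2) by (simp add: lat_dim_def)
  qed
qed

lemma side_alg:
  assumes "finite A" "lat_dim A = 2" "is_side A S"
  shows "alg_side A S"
proof -
  obtain F where F: "F face_of convex hull (embed ` A)" "aff_dim F = 1"
     "S = {p \<in> A. embed p \<in> F}" using assms(3) unfolding is_side_def by blast
  have fin: "finite (embed ` A)" using assms(1) by simp
  have "F exposed_face_of convex hull (embed ` A)"
    using F(1) exposed_face_of_polyhedron polyhedron_convex_hull[OF fin] by blast
  hence ex: "F = {} \<or> F = convex hull (embed ` A) \<or>
      (\<exists>a b. a \<noteq> 0 \<and> convex hull (embed ` A) \<subseteq> {x. a \<bullet> x \<le> b} \<and> F = convex hull (embed ` A) \<inter> {x. a \<bullet> x = b})"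
    unfolding exposed_face_of by blast
  have "F \<noteq> {}" using F(2) by auto
  moreover have "F \<noteq> convex hull (embed ` A)" using F(2) assms(2)
    by (auto simp: lat_dim_def aff_dim_convex_hull)
  ultimately obtain a b where ab: "a \<noteq> 0" "convex hull (embed ` A) \<subseteq> {x. a \<bullet> x \<le> b}"
    "F = convex hull (embed ` A) \<inter> {x. a \<bullet> x = b}" using ex by blast
  obtain S' where S': "S' \<subseteq> embed ` A" "F = convex hull S'"
    using face_of_convex_hull_subset[OF finite_imp_compact[OF fin] F(1)] by blast
  have "\<exists>e1\<in>S'. \<exists>e2\<in>S'. e1 \<noteq> e2"
  proof (rule ccontr)
    assume "\<not> ?thesis"
    then obtain e where "S' \<subseteq> {e}" by blast
    hence "aff_dim S' \<le> aff_dim {e}" by (rule aff_dim_subset)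
    thus False using F(2) S'(2) by (simp add: aff_dim_convex_hull)
  qed
  then obtain e1 e2 where e: "e1 \<in> S'" "e2 \<in> S'" "e1 \<noteq> e2" by blast
  obtain x where x: "x \<in> A" "e1 = embed x" using e(1) S'(1) by blast
  obtain y where y: "y \<in> A" "e2 = embed y" using e(2) S'(1) by blast
  have SF: "S' \<subseteq> F" using S'(2) hull_subset[of S' convex] by simp
  have xy: "x \<in> A" "y \<in> A" "embed x \<in> F" "embed y \<in> F" "x \<noteq> y"
    using x y e SF by auto
  define d1 where "d1 = fst y - fst x"
  define d2 where "d2 = snd y - snd x"
  have dn: "d1 \<noteq> 0 \<or> d2 \<noteq> 0" using xy(5) unfolding d1_def d2_def by (auto simp: prod_eq_iff)
  obtain a1 a2 where a12: "a = (a1, a2)" by (cases a)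
  have bx: "a1 * of_int (fst x) + a2 * of_int (snd x) = b" and by': "a1 * of_int (fst y) + a2 * of_int (snd y) = b"
    using xy(3,4) ab(3) a12 by (auto simp: embed_def)
  have orth: "a1 * of_int d1 + a2 * of_int d2 = 0"
    using bx by' by (simp add: d1_def d2_def algebra_simps)
  obtain t where t: "t \<noteq> 0" "a1 = - t * of_int d2" "a2 = t * of_int d1"
  proof (cases "d1 = 0")
    case True
    hence "d2 \<noteq> 0" using dn by simp
    show ?thesis
    proof (rule that[of "- a1 / of_int d2"])
      show "- a1 / of_int d2 \<noteq> 0" using \<open>d2 \<noteq> 0\<close> ab(1) a12 orth True by (auto simp: zero_prod_def)
      show "a1 = - (- a1 / of_int d2) * of_int d2" using \<open>d2 \<noteq> 0\<close> by simp
      show "a2 = - a1 / of_int d2 * of_int d1" using True orth \<open>d2 \<noteq> 0\<close> by simp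
    qed
  next
    case False
    show ?thesis
    proof (rule that[of "a2 / of_int d1"])
      have "a2 \<noteq> 0" using False ab(1) a12 orth by (auto simp: zero_prod_def)
      thus "a2 / of_int d1 \<noteq> 0" using False by simp
      show "a1 = - (a2 / of_int d1) * of_int d2" using False orth
        by (simp add: field_simps)
      show "a2 = a2 / of_int d1 * of_int d1" using False by simp
    qed
  qed
  define g where "g = iaff (- d2) d1 (d2 * fst x - d1 * snd x)"
  have geq: "a \<bullet> embed p - b = t * of_int (g p)" for p
    using bx unfolding g_def iaff_def a12 embed_def t(2,3)
    by (simp add: algebra_simps)
  have memS: "p \<in> S \<longleftrightarrow> p \<in> A \<and> g p = 0" for p
  proof -
    have "p \<in> S \<longleftrightarrow> p \<in> A \<and> embed p \<in> F" using F(3) by blast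
    also have "\<dots> \<longleftrightarrow> p \<in> A \<and> a \<bullet> embed p = b"
      using ab(3) hull_subset[of "embed ` A" convex] by auto
    also have "\<dots> \<longleftrightarrow> p \<in> A \<and> g p = 0" using geq[of p] t(1)
      by (metis eq_iff_diff_eq_0 mult_eq_0_iff of_int_eq_0_iff)
    finally show ?thesis .
  qed
  have le: "t * of_int (g p) \<le> 0" if "p \<in> A" for p
    using geq[of p] ab(2) that hull_subset[of "embed ` A" convex] by force
  show ?thesis
  proof (cases "t < 0")
    case True
    have nn: "\<forall>p\<in>A. 0 \<le> g p"
      using le True by (metis mult_le_0_iff not_less of_int_0_le_iff)
    show ?thesis unfolding alg_side_def
      apply (rule exI[of _ "- d2"], rule exI[of _ d1], rule exI[of _ "d2 * fst x - d1 * snd x"])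
      using nn dn memS g_def by auto
  next
    case False
    hence "t > 0" using t(1) by simp
    have nn: "\<forall>p\<in>A. 0 \<le> - g p"
      using le \<open>t > 0\<close> by (simp add: mult_le_0_iff)
    have ng: "iaff d2 (- d1) (- (d2 * fst x - d1 * snd x)) p = - g p" for p
      by (simp add: g_def iaff_def)
    show ?thesis unfolding alg_side_def
      apply (rule exI[of _ d2], rule exI[of _ "- d1"], rule exI[of _ "- (d2 * fst x - d1 * snd x)"])
      using nn ng dn memS by (auto simp del: neg_0_le_iff_le)
  qed
qed


lemma bez: assumes "gcd a b = (1::int)" obtains s t where "a * s + b * t = 1"
  using bezout_int[of a b] assms by (metis mult.commute)

lemma parallel:
  assumes g: "gcd a b = 1" and fx: "iaff a b c x = 0" and fy: "iaff a b c y = 0" and xy: "x \<noteq> y"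
    and gx: "iaff a' b' c' x = 0" and gy: "iaff a' b' c' y = 0"
  shows "\<exists>m. \<forall>p. iaff a' b' c' p = m * iaff a b c p"
proof -
  define d1 where "d1 = fst y - fst x"
  define d2 where "d2 = snd y - snd x"
  have dn: "d1 \<noteq> 0 \<or> d2 \<noteq> 0" using xy unfolding d1_def d2_def by (auto simp: prod_eq_iff)
  have o1: "a * d1 + b * d2 = 0" using fx fy by (simp add: iaff_def d1_def d2_def algebra_simps)
  have o2: "a' * d1 + b' * d2 = 0" using gx gy by (simp add: iaff_def d1_def d2_def algebra_simps)
  have e1: "(a * b' - a' * b) * d1 = 0"
  proof -
    have q1: "a * d1 = - (b * d2)" "a' * d1 = - (b' * d2)" using o1 o2 by linarith+
    have "(a * b' - a' * b) * d1 = b' * (a * d1) - b * (a' * d1)" by (simp add: algebra_simps)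
    also have "\<dots> = b' * (- (b * d2)) - b * (- (b' * d2))" by (simp only: q1)
    finally show ?thesis by (simp add: algebra_simps)
  qed
  have e2: "(a * b' - a' * b) * d2 = 0"
  proof -
    have q1: "b * d2 = - (a * d1)" "b' * d2 = - (a' * d1)" using o1 o2 by linarith+
    have "(a * b' - a' * b) * d2 = a * (b' * d2) - a' * (b * d2)" by (simp add: algebra_simps)
    also have "\<dots> = a * (- (a' * d1)) - a' * (- (a * d1))" by (simp only: q1)
    finally show ?thesis by (simp add: algebra_simps)
  qed
  have cr: "a * b' = a' * b" using e1 e2 dn by auto
  obtain s t where st: "a * s + b * t = 1" using bez[OF g] by blast
  define m where "m = a' * s + b' * t"
  have ha: "a' = m * a"
  proof -
    have "a' - m * a = a' * (1 - a * s) - a * b' * t" by (simp add: m_def algebra_simps)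
    also have "\<dots> = a' * b * t - a * b' * t" using st by (simp add: algebra_simps flip: st)
    finally show ?thesis using cr by simp
  qed
  have hb: "b' = m * b"
  proof -
    have "b' - m * b = b' * (1 - b * t) - a' * s * b" by (simp add: m_def algebra_simps)
    also have "\<dots> = b' * a * s - a' * s * b" using st by (simp add: algebra_simps flip: st)
    finally show ?thesis using cr by (simp add: algebra_simps)
  qed
  have c1: "c = - (a * fst x) - b * snd x" using fx by (simp add: iaff_def algebra_simps)
  have c2: "c' = - (a' * fst x) - b' * snd x" using gx by (simp add: iaff_def algebra_simps)
  have hc: "c' = m * c" unfolding c1 c2 ha hb by (simp add: algebra_simps)
  show ?thesis using ha hb hc by (intro exI[of _ m]) (simp add: iaff_def algebra_simps)
qed

lemma det_factor:
  assumes g: "gcd a b = 1" and fx: "iaff a b c x = 0" and fy: "iaff a b c y = 0"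
  shows "\<exists>k. \<forall>w. det3 x y w = k * iaff a b c w"
proof -
  define d1 where "d1 = fst y - fst x"
  define d2 where "d2 = snd y - snd x"
  have o1: "a * d1 = - (b * d2)" using fx fy by (simp add: iaff_def d1_def d2_def algebra_simps)
  obtain s t where st: "a * s + b * t = 1" using bez[OF g] by blast
  define k where "k = s * d2 - t * d1"
  have h2: "d2 = a * k"
  proof -
    have "a * k = a * s * d2 + t * (- (a * d1))" by (simp add: k_def algebra_simps)
    also have "\<dots> = a * s * d2 + t * (b * d2)" using o1 by simp
    also have "\<dots> = (a * s + b * t) * d2" by (simp add: algebra_simps)
    finally show ?thesis using st by simp
  qed
  have h1: "d1 = - b * k"
  proof -
    have "- b * k = s * (- (b * d2)) + b * t * d1" by (simp add: k_def algebra_simps)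
    also have "\<dots> = s * (a * d1) + b * t * d1" using o1 by simp
    also have "\<dots> = (a * s + b * t) * d1" by (simp add: algebra_simps)
    finally show ?thesis using st by simp
  qed
  have "det3 x y w = - k * iaff a b c w" for w
  proof -
    have "det3 x y w = d1 * (snd w - snd x) - d2 * (fst w - fst x)" by (simp add: det3_def d1_def d2_def)
    also have "\<dots> = - k * (a * (fst w - fst x) + b * (snd w - snd x))" by (simp add: h1 h2 algebra_simps)
    also have "a * (fst w - fst x) + b * (snd w - snd x) = iaff a b c w" using fx by (simp add: iaff_def algebra_simps)
    finally show ?thesis .
  qed
  thus ?thesis by blast
qed

lemma collinear3:
  assumes "a \<noteq> 0 \<or> b \<noteq> 0" "iaff a b c x = 0" "iaff a b c y = 0" "iaff a b c z = 0"
  shows "det3 x y z = 0"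
proof -
  define d1 where "d1 = fst y - fst x"
  define d2 where "d2 = snd y - snd x"
  define e1 where "e1 = fst z - fst x"
  define e2 where "e2 = snd z - snd x"
  have o1: "a * d1 = - (b * d2)" using assms by (simp add: iaff_def d1_def d2_def algebra_simps)
  have o2: "a * e1 = - (b * e2)" using assms by (simp add: iaff_def e1_def e2_def algebra_simps)
  have D: "det3 x y z = d1 * e2 - d2 * e1" by (simp add: det3_def d1_def d2_def e1_def e2_def)
  have "a * (d1 * e2 - d2 * e1) = e2 * (a * d1) - d2 * (a * e1)" by (simp add: algebra_simps)
  also have "\<dots> = e2 * (- (b * d2)) - d2 * (- (b * e2))" using o1 o2 by simp
  finally have "a * (d1 * e2 - d2 * e1) = 0" by (simp add: algebra_simps)
  moreover have "b * (d1 * e2 - d2 * e1) = 0"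
  proof -
    have "b * (d1 * e2 - d2 * e1) = d1 * (b * e2) - e1 * (b * d2)" by (simp add: algebra_simps)
    also have "\<dots> = d1 * (- (a * e1)) - e1 * (- (a * d1))" using o1 o2 by simp
    finally show ?thesis by simp
  qed
  ultimately show ?thesis using assms(1) D by auto
qed


lemma unimod_D: assumes "\<bar>D\<bar> = (1::int)" shows "D * D = 1"
  using assms by (cases "D \<ge> 0") auto

lemma gcd_dvd1: assumes "(g::int) dvd gcd a0 b0" "gcd a0 b0 = 1" "g = gcd a' b'" shows "gcd a' b' = 1"
proof -
  have "\<bar>gcd a' b'\<bar> = 1" using assms zdvd1_eq by metis
  thus ?thesis by simp
qed

lemma unimod_iaff:
  assumes "aff_unimod T"
  shows "\<exists>a' b' c'. (\<forall>p. iaff a' b' c' (T p) = iaff a0 b0 c0 p) \<and> (gcd a0 b0 = 1 \<longrightarrow> gcd a' b' = 1)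
     \<and> ((a0 \<noteq> 0 \<or> b0 \<noteq> 0) \<longrightarrow> (a' \<noteq> 0 \<or> b' \<noteq> 0))"
proof -
  obtain a b c d e f where D1: "\<bar>a*d - b*c\<bar> = 1" and T: "T = (\<lambda>p. (a * fst p + b * snd p + e, c * fst p + d * snd p + f))"
    using assms unfolding aff_unimod_def by blast
  define D where "D = a*d - b*c"
  have DD: "D * D = 1" using unimod_D D1 D_def by blast
  define a' where "a' = D * (a0 * d - b0 * c)"
  define b' where "b' = D * (b0 * a - a0 * b)"
  define c' where "c' = c0 - a' * e - b' * f"
  have k1: "a' * a + b' * c = a0"
  proof -
    have "a' * a + b' * c = (D * D) * a0" by (simp add: a'_def b'_def D_def algebra_simps)
    thus ?thesis using DD by simp
  qed
  have k2: "a' * b + b' * d = b0"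
  proof -
    have "a' * b + b' * d = (D * D) * b0" by (simp add: a'_def b'_def D_def algebra_simps)
    thus ?thesis using DD by simp
  qed
  have e: "iaff a' b' c' (T p) = iaff a0 b0 c0 p" for p
  proof -
    have "iaff a' b' c' (T p) = (a' * a + b' * c) * fst p + (a' * b + b' * d) * snd p + c0"
      by (simp add: T iaff_def c'_def algebra_simps)
    thus ?thesis by (simp add: k1 k2 iaff_def)
  qed
  have g: "gcd a' b' = 1" if "gcd a0 b0 = 1"
  proof -
    have "gcd a' b' dvd a0" unfolding k1[symmetric] by simp
    moreover have "gcd a' b' dvd b0" unfolding k2[symmetric] by simp
    ultimately have "gcd a' b' dvd gcd a0 b0" by simp
    thus ?thesis by (rule gcd_dvd1[OF _ that refl])
  qed
  have nz: "a' \<noteq> 0 \<or> b' \<noteq> 0" if "a0 \<noteq> 0 \<or> b0 \<noteq> 0"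
  proof (rule ccontr)
    assume "\<not> (a' \<noteq> 0 \<or> b' \<noteq> 0)"
    hence "a' = 0" "b' = 0" by auto
    thus False using k1 k2 that by simp
  qed
  show ?thesis
    apply (rule exI[of _ a'], rule exI[of _ b'], rule exI[of _ c'])
    using e g nz by simp
qed

lemma unimod_det:
  assumes "aff_unimod T"
  shows "\<exists>D. \<bar>D\<bar> = 1 \<and> (\<forall>x y z. det3 (T x) (T y) (T z) = D * det3 x y z)"
proof -
  obtain a b c d e f where D1: "\<bar>a*d - b*c\<bar> = 1" and T: "T = (\<lambda>p. (a * fst p + b * snd p + e, c * fst p + d * snd p + f))"
    using assms unfolding aff_unimod_def by blast
  have "det3 (T x) (T y) (T z) = (a*d - b*c) * det3 x y z" for x y z
    by (simp add: T det3_def algebra_simps)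
  thus ?thesis using D1 by blast
qed

lemma indep_det: "aff_indep3 x y z \<longleftrightarrow> det3 x y z \<noteq> 0"
  by (simp add: aff_indep3_def det3_def)

lemma unimod_indep:
  assumes "aff_unimod T"
  shows "aff_indep3 (T x) (T y) (T z) \<longleftrightarrow> aff_indep3 x y z"
proof -
  obtain D where D: "\<bar>D\<bar> = 1" "\<forall>x y z. det3 (T x) (T y) (T z) = D * det3 x y z"
    using unimod_det[OF assms] by blast
  have e: "det3 (T x) (T y) (T z) = D * det3 x y z" using D(2) by blast
  have "D \<noteq> 0" using D(1) by auto
  thus ?thesis unfolding indep_det e by simp
qed

lemma unimod_inv:
  assumes "aff_unimod T"
  shows "\<exists>T'. aff_unimod T' \<and> (\<forall>p. T' (T p) = p)"
proof -
  obtain a b c d e f where D1: "\<bar>a*d - b*c\<bar> = 1" and T: "T = (\<lambda>p. (a * fst p + b * snd p + e, c * fst p + d * snd p + f))"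
    using assms unfolding aff_unimod_def by blast
  define D where "D = a*d - b*c"
  have DD: "D * D = 1" using unimod_D D1 D_def by blast
  define T' where "T' = (\<lambda>q::lpt. ((D*d) * fst q + (-D*b) * snd q + (-D*d*e + D*b*f),
                                   (-D*c) * fst q + (D*a) * snd q + (D*c*e - D*a*f)))"
  have "aff_unimod T'"
  proof -
    have "(D*d) * (D*a) - (-D*b) * (-D*c) = (D * D) * D" by (simp add: D_def algebra_simps)
    hence "\<bar>(D*d) * (D*a) - (-D*b) * (-D*c)\<bar> = 1" using DD D1 D_def by simp
    thus ?thesis unfolding aff_unimod_def T'_def by blast
  qed
  moreover have "T' (T p) = p" for p
  proof -
    have "fst (T' (T p)) = (D * D) * fst p" by (simp add: T'_def T D_def algebra_simps)
    moreover have "snd (T' (T p)) = (D * D) * snd p" by (simp add: T'_def T D_def algebra_simps)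
    ultimately show ?thesis using DD by (simp add: prod_eq_iff)
  qed
  ultimately show ?thesis by blast
qed

lemma unimod_inj: "aff_unimod T \<Longrightarrow> inj T"
  by (metis injI unimod_inv)

lemma unimod_comp:
  assumes "aff_unimod T" "aff_unimod S"
  shows "aff_unimod (S \<circ> T)"
proof -
  obtain a b c d e f where D1: "\<bar>a*d - b*c\<bar> = 1" and T: "T = (\<lambda>p. (a * fst p + b * snd p + e, c * fst p + d * snd p + f))"
    using assms(1) unfolding aff_unimod_def by blast
  obtain a2 b2 c2 d2 e2 f2 where D2: "\<bar>a2*d2 - b2*c2\<bar> = 1" and S: "S = (\<lambda>p. (a2 * fst p + b2 * snd p + e2, c2 * fst p + d2 * snd p + f2))"
    using assms(2) unfolding aff_unimod_def by blast
  have det: "(a2*a + b2*c) * (c2*b + d2*d) - (a2*b + b2*d) * (c2*a + d2*c) = (a2*d2 - b2*c2) * (a*d - b*c)"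
    by (simp add: algebra_simps)
  have "\<bar>(a2*a + b2*c) * (c2*b + d2*d) - (a2*b + b2*d) * (c2*a + d2*c)\<bar> = 1"
    unfolding det abs_mult using D1 D2 by simp
  moreover have "S \<circ> T = (\<lambda>p. ((a2*a + b2*c) * fst p + (a2*b + b2*d) * snd p + (a2*e + b2*f + e2),
        (c2*a + d2*c) * fst p + (c2*b + d2*d) * snd p + (c2*e + d2*f + f2)))"
    by (rule ext) (simp add: S T algebra_simps)
  ultimately show ?thesis unfolding aff_unimod_def by blast
qed


lemma ldist1_transfer:
  assumes "aff_unimod T" "ldist1 G z"
  shows "ldist1 (T ` G) (T z)"
proof -
  have "\<exists>a b c. gcd a b = (1::int) \<and> (\<forall>q\<in>G. iaff a b c q = 0) \<and> \<bar>iaff a b c z\<bar> = 1"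
    using assms(2) unfolding ldist1_def by blast
  then obtain a b c where abc: "gcd a b = 1" "\<forall>q\<in>G. iaff a b c q = 0" "\<bar>iaff a b c z\<bar> = 1"
    by (elim exE conjE) (rule that)
  have "\<exists>a' b' c'. (\<forall>p. iaff a' b' c' (T p) = iaff a b c p) \<and> (gcd a b = 1 \<longrightarrow> gcd a' b' = 1)
     \<and> ((a \<noteq> 0 \<or> b \<noteq> 0) \<longrightarrow> (a' \<noteq> 0 \<or> b' \<noteq> 0))"
    by (rule unimod_iaff[OF assms(1)])
  then obtain a' b' c' where h: "\<forall>p. iaff a' b' c' (T p) = iaff a b c p" "gcd a b = 1 \<longrightarrow> gcd a' b' = 1"
     "(a \<noteq> 0 \<or> b \<noteq> 0) \<longrightarrow> (a' \<noteq> 0 \<or> b' \<noteq> 0)"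
    by (elim exE conjE) (rule that)
  have 1: "gcd a' b' = 1" using h(2) abc(1) by simp
  have 2: "\<forall>q\<in>T ` G. iaff a' b' c' q = 0" using abc(2) by (auto simp: h(1))
  have 3: "\<bar>iaff a' b' c' (T z)\<bar> = 1" using abc(3) by (simp add: h(1))
  show ?thesis unfolding ldist1_def
    apply (rule exI[of _ a'], rule exI[of _ b'], rule exI[of _ c'])
    using 1 2 3 by blast
qed

lemma alg_side_transfer:
  assumes "aff_unimod T" "alg_side A S"
  shows "alg_side (T ` A) (T ` S)"
proof -
  obtain a b c where abc: "a \<noteq> 0 \<or> b \<noteq> 0" "\<forall>p\<in>A. 0 \<le> iaff a b c p" "S = {p\<in>A. iaff a b c p = 0}"
    using assms(2) unfolding alg_side_def by blast
  obtain a' b' c' where h: "\<forall>p. iaff a' b' c' (T p) = iaff a b c p" "(a \<noteq> 0 \<or> b \<noteq> 0) \<longrightarrow> (a' \<noteq> 0 \<or> b' \<noteq> 0)"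
    using unimod_iaff[OF assms(1), of a b c] by blast
  have "T ` S = {q \<in> T ` A. iaff a' b' c' q = 0}" using h(1) abc(3) by auto
  hence e: "T ` S = {q \<in> T ` A. iaff a' b' c' q = 0}" .
  show ?thesis unfolding alg_side_def
    apply (rule exI[of _ a'], rule exI[of _ b'], rule exI[of _ c'])
    using h abc e by auto
qed

lemma marked_B_transfer:
  assumes T: "aff_unimod T" and mb: "marked_B A M"
  shows "marked_B (T ` A) ((`) T ` M)"
  unfolding marked_B_def
proof (intro ballI impI)
  fix x' y' z' assume "x' \<in> T ` A" "y' \<in> T ` A" "z' \<in> T ` A" and ind: "aff_indep3 x' y' z'"
  then obtain x y z where xyz: "x \<in> A" "y \<in> A" "z \<in> A" "x' = T x" "y' = T y" "z' = T z" by blast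
  have "aff_indep3 x y z" using ind xyz unimod_indep[OF T] by simp
  then obtain G where G: "G \<in> M" "(x \<in> G \<and> y \<in> G \<and> ldist1 G z) \<or> (x \<in> G \<and> z \<in> G \<and> ldist1 G y)
              \<or> (y \<in> G \<and> z \<in> G \<and> ldist1 G x)" using mb xyz unfolding marked_B_def by blast
  show "\<exists>G\<in>(`) T ` M. (x' \<in> G \<and> y' \<in> G \<and> ldist1 G z') \<or> (x' \<in> G \<and> z' \<in> G \<and> ldist1 G y')
              \<or> (y' \<in> G \<and> z' \<in> G \<and> ldist1 G x')"
    apply (rule bexI[of _ "T ` G"])
    using G(2) ldist1_transfer[OF T] xyz apply blast
    using G(1) by blast
qed


lemma unimod_id: "aff_unimod id"
proof -
  show ?thesis unfolding aff_unimod_def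
    apply (rule exI[of _ 1], rule exI[of _ 0], rule exI[of _ 0], rule exI[of _ 1], rule exI[of _ 0], rule exI[of _ 0])
    by (simp add: fun_eq_iff)
qed

lemma fin_min: fixes f :: "'a \<Rightarrow> int"
  assumes "finite S" "x \<in> S" shows "\<exists>y\<in>S. \<forall>z\<in>S. f y \<le> f z"
proof -
  have "Min (f ` S) \<in> f ` S" using assms by (intro Min_in) auto
  then obtain y where y: "y \<in> S" "f y = Min (f ` S)" by auto
  have "\<forall>z\<in>S. f y \<le> f z" using y assms(1) by simp
  thus ?thesis using y(1) by blast
qed

lemma fin_max: fixes f :: "'a \<Rightarrow> int"
  assumes "finite S" "x \<in> S" shows "\<exists>y\<in>S. \<forall>z\<in>S. f z \<le> f y"
proof -
  have "Max (f ` S) \<in> f ` S" using assms by (intro Max_in) auto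
  then obtain y where y: "y \<in> S" "f y = Max (f ` S)" by auto
  have "\<forall>z\<in>S. f z \<le> f y" using y assms(1) by simp
  thus ?thesis using y(1) by blast
qed

lemma alg_sideE:
  assumes "alg_side A S"
  obtains a b c where "a \<noteq> 0 \<or> b \<noteq> 0" "\<forall>p\<in>A. 0 \<le> iaff a b c p" "S = {p\<in>A. iaff a b c p = 0}"
proof -
  have "\<exists>a b c. (a \<noteq> 0 \<or> b \<noteq> 0) \<and> (\<forall>p\<in>A. 0 \<le> iaff a b c p) \<and> S = {p\<in>A. iaff a b c p = 0}"
    using assms unfolding alg_side_def by blast
  thus ?thesis using that by (elim exE conjE) 
qed

lemma ldist1E:
  assumes "ldist1 G z"
  obtains a b c where "gcd a b = 1" "\<forall>q\<in>G. iaff a b c q = 0" "\<bar>iaff a b c z\<bar> = 1"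
proof -
  have "\<exists>a b c. gcd a b = (1::int) \<and> (\<forall>q\<in>G. iaff a b c q = 0) \<and> \<bar>iaff a b c z\<bar> = 1"
    using assms unfolding ldist1_def by blast
  thus ?thesis using that by (elim exE conjE)
qed

lemma pt_eq: "fst p = fst q \<Longrightarrow> snd p = snd q \<Longrightarrow> p = (q::lpt)"
  by (simp add: prod_eq_iff)

lemma strip_side:
  assumes S: "alg_side A S" and st: "\<forall>p\<in>A. fst p = 0 \<or> fst p = 1"
    and w: "w \<in> S" "fst w = 0" and u: "u \<in> S" "fst u = 1"
  shows "S = {w, u} \<and>
    (((\<forall>p\<in>A. fst p = 0 \<longrightarrow> snd w \<le> snd p) \<and> (\<forall>p\<in>A. fst p = 1 \<longrightarrow> snd u \<le> snd p)) \<or>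
     ((\<forall>p\<in>A. fst p = 0 \<longrightarrow> snd p \<le> snd w) \<and> (\<forall>p\<in>A. fst p = 1 \<longrightarrow> snd p \<le> snd u)))"
proof -
  obtain a b c where abc: "a \<noteq> 0 \<or> b \<noteq> 0" "\<forall>p\<in>A. 0 \<le> iaff a b c p" "S = {p\<in>A. iaff a b c p = 0}"
    using alg_sideE[OF S] by blast
  have gw: "b * snd w + c = 0" using w abc(3) by (simp add: iaff_def)
  have gu: "a + b * snd u + c = 0" using u abc(3) by (simp add: iaff_def)
  have g0: "iaff a b c p = b * (snd p - snd w)" if "fst p = 0" for p
    using that gw by (simp add: iaff_def algebra_simps)
  have g1: "iaff a b c p = b * (snd p - snd u)" if "fst p = 1" for p
    using that gu by (simp add: iaff_def algebra_simps)
  have b0: "b \<noteq> 0" using gw gu abc(1) by auto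
  have wA: "w \<in> A" and uA: "u \<in> A" using w u abc(3) by auto
  have "S = {w, u}"
  proof
    show "{w, u} \<subseteq> S" using w u by simp
    show "S \<subseteq> {w, u}"
    proof
      fix p assume p: "p \<in> S"
      hence pA: "p \<in> A" and gp: "iaff a b c p = 0" using abc(3) by auto
      show "p \<in> {w, u}"
      proof (cases "fst p = 0")
        case True
        hence "snd p = snd w" using g0[OF True] gp b0 by simp
        hence "p = w" using True w(2) pt_eq by metis
        thus ?thesis by simp
      next
        case False
        hence F: "fst p = 1" using st pA by blast
        hence "snd p = snd u" using g1[OF F] gp b0 by simp
        hence "p = u" using F u(2) pt_eq by metis
        thus ?thesis by simp
      qed
    qed
  qed
  moreover have "((\<forall>p\<in>A. fst p = 0 \<longrightarrow> snd w \<le> snd p) \<and> (\<forall>p\<in>A. fst p = 1 \<longrightarrow> snd u \<le> snd p)) \<or>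
     ((\<forall>p\<in>A. fst p = 0 \<longrightarrow> snd p \<le> snd w) \<and> (\<forall>p\<in>A. fst p = 1 \<longrightarrow> snd p \<le> snd u))"
  proof (cases "b > 0")
    case True
    have "\<forall>p\<in>A. fst p = 0 \<longrightarrow> snd w \<le> snd p"
    proof (intro ballI impI)
      fix p assume "p \<in> A" "fst p = 0"
      hence "0 \<le> b * (snd p - snd w)" using abc(2) g0 by metis
      thus "snd w \<le> snd p" using True by (simp add: zero_le_mult_iff)
    qed
    moreover have "\<forall>p\<in>A. fst p = 1 \<longrightarrow> snd u \<le> snd p"
    proof (intro ballI impI)
      fix p assume "p \<in> A" "fst p = 1"
      hence "0 \<le> b * (snd p - snd u)" using abc(2) g1 by metis
      thus "snd u \<le> snd p" using True by (simp add: zero_le_mult_iff)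
    qed
    ultimately show ?thesis by blast
  next
    case False
    hence bn: "b < 0" using b0 by simp
    have "\<forall>p\<in>A. fst p = 0 \<longrightarrow> snd p \<le> snd w"
    proof (intro ballI impI)
      fix p assume "p \<in> A" "fst p = 0"
      hence "0 \<le> b * (snd p - snd w)" using abc(2) g0 by metis
      thus "snd p \<le> snd w" using bn by (simp add: zero_le_mult_iff)
    qed
    moreover have "\<forall>p\<in>A. fst p = 1 \<longrightarrow> snd p \<le> snd u"
    proof (intro ballI impI)
      fix p assume "p \<in> A" "fst p = 1"
      hence "0 \<le> b * (snd p - snd u)" using abc(2) g1 by metis
      thus "snd p \<le> snd u" using bn by (simp add: zero_le_mult_iff)
    qed
    ultimately show ?thesis by blast
  qed
  ultimately show ?thesis by blast
qed

lemma strip_ldist: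
  assumes "ldist1 S v" "w \<in> S" "u \<in> S" "fst w = 0" "fst u = 1" "fst v = 1"
  shows "\<bar>snd v - snd u\<bar> = 1"
proof -
  obtain a b c where abc: "gcd a b = 1" "\<forall>q\<in>S. iaff a b c q = 0" "\<bar>iaff a b c v\<bar> = 1"
    using ldist1E[OF assms(1)] by blast
  have "iaff a b c w = 0" "iaff a b c u = 0" using abc(2) assms(2,3) by blast+
  hence gw: "b * snd w + c = 0" and gu: "a + b * snd u + c = 0" using assms(4,5) by (simp_all add: iaff_def)
  have "iaff a b c v = b * (snd v - snd u)" using gu assms(6) by (simp add: iaff_def algebra_simps)
  hence "\<bar>b * (snd v - snd u)\<bar> = 1" using abc(3) by simp
  moreover have "(snd v - snd u) dvd \<bar>b * (snd v - snd u)\<bar>" by simp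
  ultimately have "(snd v - snd u) dvd 1" by simp
  thus ?thesis by simp
qed

lemma strip_tri:
  assumes mb: "marked_B A M" and sides: "\<forall>S\<in>M. alg_side A S"
    and UM: "{p\<in>A. fst p = 1} \<notin> M"
    and u: "u \<in> A" "fst u = 1" and v: "v \<in> A" "fst v = 1" "u \<noteq> v"
    and w: "w \<in> A" "fst w = 0"
  shows "\<exists>S\<in>M. (w \<in> S \<and> u \<in> S \<and> ldist1 S v) \<or> (w \<in> S \<and> v \<in> S \<and> ldist1 S u)"
proof -
  have "snd u \<noteq> snd v" using u v pt_eq by metis
  hence "aff_indep3 u v w" using u v w by (simp add: aff_indep3_def)
  then obtain G where G: "G \<in> M" "(u \<in> G \<and> v \<in> G \<and> ldist1 G w) \<or> (u \<in> G \<and> w \<in> G \<and> ldist1 G v)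
              \<or> (v \<in> G \<and> w \<in> G \<and> ldist1 G u)" using mb u v w unfolding marked_B_def by blast
  have "\<not> (u \<in> G \<and> v \<in> G)"
  proof
    assume uv: "u \<in> G \<and> v \<in> G"
    obtain a b c where abc: "a \<noteq> 0 \<or> b \<noteq> 0" "\<forall>p\<in>A. 0 \<le> iaff a b c p" "G = {p\<in>A. iaff a b c p = 0}"
      using alg_sideE sides G(1) by metis
    have "a + b * snd u + c = 0" "a + b * snd v + c = 0" using uv abc(3) u v by (auto simp: iaff_def)
    hence e: "b * snd u = b * snd v" by linarith
    hence "b * (snd u - snd v) = 0" by (simp add: right_diff_distrib)
    hence b0: "b = 0" using \<open>snd u \<noteq> snd v\<close> by simp
    hence c: "c = - a" using \<open>a + b * snd u + c = 0\<close> by simp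
    have a0: "a \<noteq> 0" using abc(1) b0 by simp
    have "G = {p\<in>A. fst p = 1}"
      unfolding abc(3) using a0 b0 c by (auto simp: iaff_def algebra_simps)
    thus False using G(1) UM by simp
  qed
  thus ?thesis using G by blast
qed


lemma strip_main:
  assumes fin: "finite A" and mb: "marked_B A M" and sides: "\<forall>S\<in>M. alg_side A S"
    and st: "\<forall>p\<in>A. fst p = 0 \<or> fst p = 1"
    and G0M: "{p\<in>A. fst p = 0} \<in> M"
    and w: "w \<in> A" "w' \<in> A" "fst w = 0" "fst w' = 0" "w \<noteq> w'"
    and u: "u \<in> A" "u' \<in> A" "fst u = 1" "fst u' = 1" "u \<noteq> u'"
  shows "\<exists>T. aff_unimod T \<and> (B2_marked (T ` A) ((`) T ` M) \<or> flat_border_marked (T ` A) ((`) T ` M))"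
proof (cases "{p\<in>A. fst p = 1} \<in> M")
  case True
  have "B2_marked A M" unfolding B2_marked_def using st G0M True by auto
  thus ?thesis using unimod_id by (intro exI[of _ id]) simp
next
  case False
  note UM = False
  define G0 where "G0 = {p\<in>A. fst p = 0}"
  define U where "U = {p\<in>A. fst p = 1}"
  have finG: "finite G0" and finU: "finite U" using fin by (auto simp: G0_def U_def)
  have wG0: "w \<in> G0" using w by (simp add: G0_def)
  have uU: "u \<in> U" using u by (simp add: U_def)
  obtain w0 where w0: "w0 \<in> G0" "\<forall>z\<in>G0. snd w0 \<le> snd z" using fin_min[where f=snd, OF finG wG0] by blast
  obtain w1 where w1: "w1 \<in> G0" "\<forall>z\<in>G0. snd z \<le> snd w1" using fin_max[where f=snd, OF finG wG0] by blast
  obtain u0 where u0: "u0 \<in> U" "\<forall>z\<in>U. snd u0 \<le> snd z" using fin_min[where f=snd, OF finU uU] by blast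
  obtain u1 where u1: "u1 \<in> U" "\<forall>z\<in>U. snd z \<le> snd u1" using fin_max[where f=snd, OF finU uU] by blast
  have w0A: "w0 \<in> A" "fst w0 = 0" and w1A: "w1 \<in> A" "fst w1 = 0" using w0 w1 by (auto simp: G0_def)
  have u0A: "u0 \<in> A" "fst u0 = 1" and u1A: "u1 \<in> A" "fst u1 = 1" using u0 u1 by (auto simp: U_def)
  have "snd w \<noteq> snd w'" using w pt_eq by metis
  moreover have "w' \<in> G0" using w by (simp add: G0_def)
  hence "snd w0 \<le> snd w" "snd w0 \<le> snd w'" "snd w \<le> snd w1" "snd w' \<le> snd w1" using w0 w1 wG0 by auto
  ultimately have hw: "snd w0 < snd w1" by linarith
  have "snd u \<noteq> snd u'" using u pt_eq by metis
  moreover have "u' \<in> U" using u by (simp add: U_def)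
  hence "snd u0 \<le> snd u" "snd u0 \<le> snd u'" "snd u \<le> snd u1" "snd u' \<le> snd u1" using u0 u1 uU by auto
  ultimately have hu: "snd u0 < snd u1" by linarith
  have u01: "u0 \<noteq> u1" using hu by auto
  obtain S where S: "S \<in> M" "(w0 \<in> S \<and> u0 \<in> S \<and> ldist1 S u1) \<or> (w0 \<in> S \<and> u1 \<in> S \<and> ldist1 S u0)"
    using strip_tri[OF mb sides UM u0A u1A u01 w0A] by blast
  have SL: "w0 \<in> S \<and> u0 \<in> S \<and> ldist1 S u1"
  proof -
    have "\<not> (w0 \<in> S \<and> u1 \<in> S)"
    proof
      assume a: "w0 \<in> S \<and> u1 \<in> S"
      have "((\<forall>p\<in>A. fst p = 0 \<longrightarrow> snd w0 \<le> snd p) \<and> (\<forall>p\<in>A. fst p = 1 \<longrightarrow> snd u1 \<le> snd p)) \<or>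
     ((\<forall>p\<in>A. fst p = 0 \<longrightarrow> snd p \<le> snd w0) \<and> (\<forall>p\<in>A. fst p = 1 \<longrightarrow> snd p \<le> snd u1))"
        using strip_side[OF _ st _ w0A(2) _ u1A(2)] sides S(1) a by blast
      thus False using u0A w1A hu hw by fastforce
    qed
    thus ?thesis using S(2) by blast
  qed
  have SLe: "S = {w0, u0}" using strip_side[OF _ st _ w0A(2) _ u0A(2)] sides S(1) SL by blast
  have "\<bar>snd u1 - snd u0\<bar> = 1" using strip_ldist[OF _ _ _ w0A(2) u0A(2) u1A(2)] SL by blast
  hence k1: "snd u1 = snd u0 + 1" using hu by simp
  have LM: "{w0, u0} \<in> M" using S(1) SLe by simp
  obtain R where R: "R \<in> M" "(w1 \<in> R \<and> u0 \<in> R \<and> ldist1 R u1) \<or> (w1 \<in> R \<and> u1 \<in> R \<and> ldist1 R u0)"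
    using strip_tri[OF mb sides UM u0A u1A u01 w1A] by blast
  have RR: "w1 \<in> R \<and> u1 \<in> R"
  proof -
    have "\<not> (w1 \<in> R \<and> u0 \<in> R)"
    proof
      assume a: "w1 \<in> R \<and> u0 \<in> R"
      have "((\<forall>p\<in>A. fst p = 0 \<longrightarrow> snd w1 \<le> snd p) \<and> (\<forall>p\<in>A. fst p = 1 \<longrightarrow> snd u0 \<le> snd p)) \<or>
     ((\<forall>p\<in>A. fst p = 0 \<longrightarrow> snd p \<le> snd w1) \<and> (\<forall>p\<in>A. fst p = 1 \<longrightarrow> snd p \<le> snd u0))"
        using strip_side[OF _ st _ w1A(2) _ u0A(2)] sides R(1) a by blast
      thus False using w0A u1A hu hw by fastforce
    qed
    thus ?thesis using R(2) by blast
  qed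
  have RRe: "R = {w1, u1}" using strip_side[OF _ st _ w1A(2) _ u1A(2)] sides R(1) RR by blast
  have RM: "{w1, u1} \<in> M" using R(1) RRe by simp
  have allp: "p \<in> {w0, w1, u0, u1}" if pA: "p \<in> A" for p
  proof (cases "fst p = 0")
    case True
    obtain S' where S': "S' \<in> M" "(p \<in> S' \<and> u0 \<in> S' \<and> ldist1 S' u1) \<or> (p \<in> S' \<and> u1 \<in> S' \<and> ldist1 S' u0)"
      using strip_tri[OF mb sides UM u0A u1A u01 pA True] by blast
    have ext: "(\<forall>q\<in>A. fst q = 0 \<longrightarrow> snd p \<le> snd q) \<or> (\<forall>q\<in>A. fst q = 0 \<longrightarrow> snd q \<le> snd p)"
    proof (cases "p \<in> S' \<and> u0 \<in> S'")
      case True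
      thus ?thesis using strip_side[OF _ st _ \<open>fst p = 0\<close> _ u0A(2)] sides S'(1) by blast
    next
      case False
      hence "p \<in> S' \<and> u1 \<in> S'" using S'(2) by blast
      thus ?thesis using strip_side[OF _ st _ \<open>fst p = 0\<close> _ u1A(2)] sides S'(1) by blast
    qed
    have "p \<in> G0" using pA True by (simp add: G0_def)
    hence "snd p = snd w0 \<or> snd p = snd w1" using ext w0 w1 w0A w1A by force
    hence "p = w0 \<or> p = w1" using True w0A w1A pt_eq by metis
    thus ?thesis by blast
  next
    case False
    hence p1: "fst p = 1" using st pA by blast
    show ?thesis
    proof (rule ccontr)
      assume np: "p \<notin> {w0, w1, u0, u1}"
      hence pu1: "p \<noteq> u1" by blast
      obtain S' where S': "S' \<in> M" "(w0 \<in> S' \<and> p \<in> S' \<and> ldist1 S' u1) \<or> (w0 \<in> S' \<and> u1 \<in> S' \<and> ldist1 S' p)"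
        using strip_tri[OF mb sides UM pA p1 u1A pu1 w0A] by blast
      obtain q where q: "q = p \<or> q = u1" "w0 \<in> S'" "q \<in> S'" using S'(2) by blast
      have fq: "fst q = 1" using q(1) p1 u1A by auto
      have "((\<forall>p\<in>A. fst p = 0 \<longrightarrow> snd w0 \<le> snd p) \<and> (\<forall>p\<in>A. fst p = 1 \<longrightarrow> snd q \<le> snd p)) \<or>
     ((\<forall>p\<in>A. fst p = 0 \<longrightarrow> snd p \<le> snd w0) \<and> (\<forall>p\<in>A. fst p = 1 \<longrightarrow> snd p \<le> snd q))"
        using strip_side[OF _ st _ w0A(2) _ fq] sides S'(1) q by blast
      hence "\<forall>p\<in>A. fst p = 1 \<longrightarrow> snd q \<le> snd p" using w1A hw by fastforce
      hence "snd q \<le> snd u0" using u0A by blast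
      moreover have qU: "q \<in> U" using q(1) pA p1 u1(1) by (auto simp: U_def)
      hence "snd u0 \<le> snd q" using u0(2) by blast
      ultimately have "snd q = snd u0" by simp
      hence "q = u0" using fq u0A pt_eq by metis
      thus False using q(1) np hu by auto
    qed
  qed
  have Aeq: "A = {w0, w1, u0, u1}" using allp w0A w1A u0A u1A by blast
  have G0eq: "G0 = {w0, w1}" using Aeq w0A w1A u0A u1A unfolding G0_def by auto
  have G0M': "{w0, w1} \<in> M" using G0M G0eq G0_def by simp
  define h0 where "h0 = snd w0"
  define k0 where "k0 = snd u0"
  define a where "a = snd w1 - snd w0"
  have a1: "a \<ge> 1" using hw a_def by simp
  define T where "T = (\<lambda>p::lpt. ((- (k0 - h0)) * fst p + 1 * snd p + (- h0), 1 * fst p + 0 * snd p + 0))"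
  have TU: "aff_unimod T" unfolding aff_unimod_def T_def
    by (rule exI[of _ "- (k0 - h0)"], rule exI[of _ 1], rule exI[of _ 1], rule exI[of _ 0],
        rule exI[of _ "- h0"], rule exI[of _ 0]) simp
  have Tw0: "T w0 = (0, 0)" using w0A by (simp add: T_def h0_def)
  have Tw1: "T w1 = (a, 0)" using w1A by (simp add: T_def h0_def a_def)
  have Tu0: "T u0 = (0, 1)" using u0A by (simp add: T_def h0_def k0_def)
  have Tu1: "T u1 = (1, 1)" using u1A k1 by (simp add: T_def h0_def k0_def)
  have TA: "T ` A = {(0,0), (a,0), (0,1), (1,1)}" using Aeq Tw0 Tw1 Tu0 Tu1 by auto
  have m1: "{(0,0), (a,0)} \<in> (`) T ` M" using G0M' Tw0 Tw1
    by (metis (no_types, lifting) image_empty image_eqI image_insert)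
  have m2: "{(a,0), (1,1)} \<in> (`) T ` M" using RM Tw1 Tu1
    by (metis (no_types, lifting) image_empty image_eqI image_insert)
  have m3: "{(0,0), (0,1)} \<in> (`) T ` M" using LM Tw0 Tu0
    by (metis (no_types, lifting) image_empty image_eqI image_insert)
  show ?thesis
  proof (cases "a = 1")
    case True
    have "B2_marked (T ` A) ((`) T ` M)"
      unfolding B2_marked_def TA
    proof (intro conjI)
      show "{(0, 0), (a, 0), (0, 1), (1, 1)} \<subseteq> {p. fst p \<in> {0, 1}}" using True by auto
      have e3: "{p \<in> {(0, 0), (a, 0), (0, 1), (1, 1)}. fst p = 0} = {(0,0), (0,1)}" using True by auto
      show "{p \<in> {(0, 0), (a, 0), (0, 1), (1, 1)}. fst p = 0} \<in> (`) T ` M" unfolding e3 by (rule m3)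
      have e2: "{p \<in> {(0, 0), (a, 0), (0, 1), (1, 1)}. fst p = 1} = {(a,0), (1,1)}" using True by auto
      show "{p \<in> {(0, 0), (a, 0), (0, 1), (1, 1)}. fst p = 1} \<in> (`) T ` M" unfolding e2 by (rule m2)
    qed
    thus ?thesis using TU by blast
  next
    case False
    have "{(0,1), (0,0)} = {(0,0), (0::int,1::int)}" by auto
    hence "flat_border_marked (T ` A) ((`) T ` M)"
      unfolding flat_border_marked_def TA using False a1 m1 m2 m3
      by (intro exI[of _ a]) auto
    thus ?thesis using TU by blast
  qed
qed


lemma det3_same12: "det3 x x z = 0" by (simp add: det3_def)
lemma det3_same13: "det3 x y x = 0" by (simp add: det3_def)
lemma det3_same23: "det3 x y y = 0" by (simp add: det3_def algebra_simps)

lemma on_affD: "on_aff G q \<Longrightarrow> \<forall>p\<in>G. iaff a b c p = 0 \<Longrightarrow> iaff a b c q = 0"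
  unfolding on_aff_def by blast

lemma rev_B1:
  assumes sides: "\<forall>S\<in>M. alg_side A S" and B1: "B1_marked A M"
  shows "marked_B A M"
proof -
  have "\<exists>G\<in>M. \<exists>p. {q \<in> A. \<not> on_aff G q} = {p} \<and> ldist1 G p"
    using B1 unfolding B1_marked_def .
  then obtain G p where G: "G \<in> M" "{q \<in> A. \<not> on_aff G q} = {p}" "ldist1 G p"
    by (elim bexE exE conjE) (rule that)
  have "alg_side A G" using sides G(1) by (rule bspec)
  then obtain a b c where abc: "a \<noteq> 0 \<or> b \<noteq> 0" "\<forall>p\<in>A. 0 \<le> iaff a b c p" "G = {p\<in>A. iaff a b c p = 0}"
    by (rule alg_sideE)
  have gG: "\<forall>q\<in>G. iaff a b c q = 0" using abc(3) by simp
  have inG: "q \<in> G" if "q \<in> A" "q \<noteq> p" for q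
  proof -
    have "q \<notin> {q \<in> A. \<not> on_aff G q}" using G(2) that(2) by simp
    hence "on_aff G q" using that(1) by simp
    hence "iaff a b c q = 0" using gG by (rule on_affD)
    thus ?thesis using abc(3) that by simp
  qed
  show ?thesis unfolding marked_B_def
  proof (intro ballI impI)
    fix x y z assume xyz: "x \<in> A" "y \<in> A" "z \<in> A" and ind: "aff_indep3 x y z"
    have d: "det3 x y z \<noteq> 0" using ind indep_det by blast
    show "\<exists>G\<in>M. (x \<in> G \<and> y \<in> G \<and> ldist1 G z) \<or> (x \<in> G \<and> z \<in> G \<and> ldist1 G y) \<or> (y \<in> G \<and> z \<in> G \<and> ldist1 G x)"
    proof (cases "x = p")
      case True
      have "y \<noteq> p" using d True det3_same12 by metis
      moreover have "z \<noteq> p" using d True det3_same13 by metis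
      ultimately have "y \<in> G" "z \<in> G" using inG xyz by auto
      thus ?thesis using G(1,3) True by blast
    next
      case xp: False
      hence xG: "x \<in> G" using inG xyz by auto
      show ?thesis
      proof (cases "y = p")
        case True
        have "z \<noteq> p" using d True det3_same23 by metis
        hence "z \<in> G" using inG xyz by auto
        thus ?thesis using G(1,3) True xG by blast
      next
        case yp: False
        hence yG: "y \<in> G" using inG xyz by auto
        show ?thesis
        proof (cases "z = p")
          case True
          thus ?thesis using G(1,3) xG yG by blast
        next
          case False
          hence "z \<in> G" using inG xyz by auto
          hence "det3 x y z = 0" using collinear3[OF abc(1)] gG xG yG by blast
          thus ?thesis using d by simp
        qed
      qed
    qed
  qed
qed


lemma ld_fst0: "fst q = 1 \<Longrightarrow> ldist1 {p\<in>A. fst p = 0} q"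
  unfolding ldist1_def by (rule exI[of _ 1], rule exI[of _ 0], rule exI[of _ 0]) (simp add: iaff_def)

lemma ld_fst1: "fst q = 0 \<Longrightarrow> ldist1 {p\<in>A. fst p = 1} q"
  unfolding ldist1_def by (rule exI[of _ 1], rule exI[of _ 0], rule exI[of _ "-1"]) (simp add: iaff_def)

lemma pick12: "G \<in> M \<Longrightarrow> x \<in> G \<Longrightarrow> y \<in> G \<Longrightarrow> ldist1 G z \<Longrightarrow>
  \<exists>G\<in>M. (x \<in> G \<and> y \<in> G \<and> ldist1 G z) \<or> (x \<in> G \<and> z \<in> G \<and> ldist1 G y) \<or> (y \<in> G \<and> z \<in> G \<and> ldist1 G x)"
  by blast
lemma pick13: "G \<in> M \<Longrightarrow> x \<in> G \<Longrightarrow> z \<in> G \<Longrightarrow> ldist1 G y \<Longrightarrow>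
  \<exists>G\<in>M. (x \<in> G \<and> y \<in> G \<and> ldist1 G z) \<or> (x \<in> G \<and> z \<in> G \<and> ldist1 G y) \<or> (y \<in> G \<and> z \<in> G \<and> ldist1 G x)"
  by blast
lemma pick23: "G \<in> M \<Longrightarrow> y \<in> G \<Longrightarrow> z \<in> G \<Longrightarrow> ldist1 G x \<Longrightarrow>
  \<exists>G\<in>M. (x \<in> G \<and> y \<in> G \<and> ldist1 G z) \<or> (x \<in> G \<and> z \<in> G \<and> ldist1 G y) \<or> (y \<in> G \<and> z \<in> G \<and> ldist1 G x)"
  by blast

lemma rev_B2:
  assumes B2: "B2_marked A M"
  shows "marked_B A M"
proof -
  have st: "\<forall>p\<in>A. fst p = 0 \<or> fst p = 1" and M0: "{p\<in>A. fst p = 0} \<in> M" and M1: "{p\<in>A. fst p = 1} \<in> M"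
    using B2 unfolding B2_marked_def by auto
  show ?thesis unfolding marked_B_def
  proof (intro ballI impI)
    fix x y z assume xyz: "x \<in> A" "y \<in> A" "z \<in> A" and ind: "aff_indep3 x y z"
    have ne: "\<not> (fst x = fst y \<and> fst x = fst z)"
      using ind by (auto simp: aff_indep3_def)
    have fx: "fst x = 0 \<or> fst x = 1" and fy: "fst y = 0 \<or> fst y = 1" and fz: "fst z = 0 \<or> fst z = 1"
      using st xyz by auto
    have m0: "q \<in> {p\<in>A. fst p = 0}" if "q \<in> A" "fst q = 0" for q using that by simp
    have m1: "q \<in> {p\<in>A. fst p = 1}" if "q \<in> A" "fst q = 1" for q using that by simp
    show "\<exists>G\<in>M. (x \<in> G \<and> y \<in> G \<and> ldist1 G z) \<or> (x \<in> G \<and> z \<in> G \<and> ldist1 G y) \<or> (y \<in> G \<and> z \<in> G \<and> ldist1 G x)"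
    proof -
      consider "fst x = 0" "fst y = 0" "fst z = 1" | "fst x = 0" "fst y = 1" "fst z = 0"
        | "fst x = 1" "fst y = 0" "fst z = 0" | "fst x = 1" "fst y = 1" "fst z = 0"
        | "fst x = 1" "fst y = 0" "fst z = 1" | "fst x = 0" "fst y = 1" "fst z = 1"
        using fx fy fz ne by fastforce
      thus ?thesis
      proof cases
        case 1 thus ?thesis using pick12[OF M0 m0 m0 ld_fst0] xyz by simp
      next
        case 2 thus ?thesis using pick13[OF M0 m0 m0 ld_fst0] xyz by simp
      next
        case 3 thus ?thesis using pick23[OF M0 m0 m0 ld_fst0] xyz by simp
      next
        case 4 thus ?thesis using pick12[OF M1 m1 m1 ld_fst1] xyz by simp
      next
        case 5 thus ?thesis using pick13[OF M1 m1 m1 ld_fst1] xyz by simp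
      next
        case 6 thus ?thesis using pick23[OF M1 m1 m1 ld_fst1] xyz by simp
      qed
    qed
  qed
qed


lemma rev_flat:
  assumes F: "flat_border_marked A M"
  shows "marked_B A M"
proof -
  obtain a :: int where a: "a > 1" "A = {(0,0), (a,0), (0,1), (1,1)}"
    "{(0,0), (a,0)} \<in> M" "{(a,0), (1,1)} \<in> M" "{(0,1), (0,0)} \<in> M"
    using F unfolding flat_border_marked_def by blast
  have lB: "ldist1 {(0,0), (a,0)} q" if "snd q = 1" for q
    unfolding ldist1_def
    apply (rule exI[of _ 0], rule exI[of _ 1], rule exI[of _ 0]) using that by (simp add: iaff_def)
  have lL: "ldist1 {(0,1), (0,0)} q" if "fst q = 1" for q
    unfolding ldist1_def
    apply (rule exI[of _ 1], rule exI[of _ 0], rule exI[of _ 0]) using that by (simp add: iaff_def)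
  have lR: "ldist1 {(a,0), (1,1)} (0,1)"
    unfolding ldist1_def
    by (rule exI[of _ 1], rule exI[of _ "a - 1"], rule exI[of _ "- a"]) (simp add: iaff_def)
  have lB1: "ldist1 {(0,0), (a,0)} (0,1)" and lB2: "ldist1 {(0,0), (a,0)} (1,1)" using lB by auto
  have lL1: "ldist1 {(0,1), (0,0)} (1,1)" using lL by auto
  show ?thesis unfolding marked_B_def
  proof (intro ballI impI)
    fix x y z assume xyz: "x \<in> A" "y \<in> A" "z \<in> A" and ind: "aff_indep3 x y z"
    show "\<exists>G\<in>M. (x \<in> G \<and> y \<in> G \<and> ldist1 G z) \<or> (x \<in> G \<and> z \<in> G \<and> ldist1 G y) \<or> (y \<in> G \<and> z \<in> G \<and> ldist1 G x)"
      using xyz ind a(1) unfolding a(2)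
      apply (simp only: insert_iff empty_iff simp_thms)
      apply (elim disjE)
      apply (simp_all add: aff_indep3_def)
      apply ((rule bexI[OF _ a(3)], ((simp add: lB1 lB2); fail)) |
             (rule bexI[OF _ a(4)], ((simp add: lR); fail)) |
             (rule bexI[OF _ a(5)], ((simp add: lL1); fail)))+
      done
  qed
qed


lemma det_perm1: "det3 x z y = - det3 x y z" by (simp add: det3_def algebra_simps)
lemma det_perm2: "det3 y z x = det3 x y z" by (simp add: det3_def algebra_simps)

lemma comp_goal:
  assumes T1: "aff_unimod T1" and T2: "aff_unimod T2"
    and P: "P (T2 ` (T1 ` A)) ((`) T2 ` ((`) T1 ` M))"
  shows "\<exists>T. aff_unimod T \<and> P (T ` A) ((`) T ` M)"
proof -
  have "(T2 \<circ> T1) ` A = T2 ` (T1 ` A)" by (simp add: image_comp)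
  moreover have "(`) (T2 \<circ> T1) ` M = (`) T2 ` ((`) T1 ` M)" by (simp add: image_comp)
  ultimately show ?thesis using unimod_comp[OF T1 T2] P by (intro exI[of _ "T2 \<circ> T1"]) simp
qed

lemma core2:
  assumes fin: "finite A" and mb: "marked_B A M" and sides: "\<forall>S\<in>M. alg_side A S"
    and g: "gcd a b = 1" and f01: "\<forall>p\<in>A. iaff a b c p = 0 \<or> iaff a b c p = 1"
    and Geq: "G = {p\<in>A. iaff a b c p = 0}" and GM: "G \<in> M"
    and x: "x \<in> G" "y \<in> G" "x \<noteq> y" and z: "z \<in> A" "iaff a b c z = 1" "ldist1 G z"
  shows "\<exists>T. aff_unimod T \<and> (B1_marked (T ` A) ((`) T ` M) \<or> B2_marked (T ` A) ((`) T ` M)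
        \<or> flat_border_marked (T ` A) ((`) T ` M))"
proof -
  have fx: "iaff a b c x = 0" and fy: "iaff a b c y = 0" and xA: "x \<in> A" and yA: "y \<in> A"
    using x Geq by auto
  show ?thesis
  proof (cases "\<exists>z'\<in>A. iaff a b c z' = 1 \<and> z' \<noteq> z")
    case False
    have gG: "\<forall>p\<in>G. iaff a b c p = 0" using Geq by simp
    have on: "on_aff G q \<longleftrightarrow> iaff a b c q = 0" for q
    proof
      assume "on_aff G q"
      thus "iaff a b c q = 0" using gG by (rule on_affD)
    next
      assume fq: "iaff a b c q = 0"
      show "on_aff G q" unfolding on_aff_def
      proof (intro allI impI)
        fix a' b' c' assume h: "\<forall>p\<in>G. iaff a' b' c' p = 0"
        obtain m where mm: "\<forall>p. iaff a' b' c' p = m * iaff a b c p"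
          using parallel[OF g fx fy x(3)] h x(1,2) by blast
        show "iaff a' b' c' q = 0" using fq mm[rule_format, of q] by simp
      qed
    qed
    have "{q \<in> A. \<not> on_aff G q} = {z}"
    proof (intro equalityI subsetI)
      fix q assume "q \<in> {q \<in> A. \<not> on_aff G q}"
      hence "q \<in> A" "iaff a b c q \<noteq> 0" using on by auto
      hence "q \<in> A" "iaff a b c q = 1" using f01 by auto
      thus "q \<in> {z}" using False by auto
    next
      fix q assume "q \<in> {z}"
      thus "q \<in> {q \<in> A. \<not> on_aff G q}" using z on by simp
    qed
    hence "B1_marked A M" unfolding B1_marked_def using GM z(3) by blast
    thus ?thesis using unimod_id by (intro exI[of _ id]) simp
  next
    case True
    then obtain z' where z': "z' \<in> A" "iaff a b c z' = 1" "z' \<noteq> z" by blast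
    obtain s t where st: "a * s + b * t = 1" using bez[OF g] by blast
    define T1 where "T1 = (\<lambda>p::lpt. (a * fst p + b * snd p + c, (- t) * fst p + s * snd p + 0))"
    have TU: "aff_unimod T1" unfolding aff_unimod_def T1_def
      apply (rule exI[of _ a], rule exI[of _ b], rule exI[of _ "- t"], rule exI[of _ s], rule exI[of _ c], rule exI[of _ 0])
      using st by simp
    have fT: "fst (T1 p) = iaff a b c p" for p by (simp add: T1_def iaff_def)
    have inj: "inj T1" by (rule unimod_inj[OF TU])
    define A1 where "A1 = T1 ` A"
    define M1 where "M1 = (`) T1 ` M"
    have fin1: "finite A1" using fin by (simp add: A1_def)
    have mb1: "marked_B A1 M1" unfolding A1_def M1_def by (rule marked_B_transfer[OF TU mb])
    have sides1: "\<forall>S\<in>M1. alg_side A1 S" unfolding A1_def M1_def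
      using alg_side_transfer[OF TU] sides by blast
    have st1: "\<forall>p\<in>A1. fst p = 0 \<or> fst p = 1" unfolding A1_def using f01 fT by auto
    have "{p\<in>A1. fst p = 0} = T1 ` G" unfolding A1_def Geq using fT by auto
    hence G0M: "{p\<in>A1. fst p = 0} \<in> M1" unfolding M1_def using GM by simp
    have "T1 x \<noteq> T1 y" using inj x(3) by (meson injD)
    moreover have "T1 z \<noteq> T1 z'" using inj z'(3) unfolding inj_def by metis
    ultimately obtain T2 where T2: "aff_unimod T2" "B2_marked (T2 ` A1) ((`) T2 ` M1) \<or> flat_border_marked (T2 ` A1) ((`) T2 ` M1)"
      using strip_main[OF fin1 mb1 sides1 st1 G0M, of "T1 x" "T1 y" "T1 z" "T1 z'"]
        xA yA z(1,2) z'(1,2) fT fx fy unfolding A1_def by auto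
    show ?thesis
      apply (rule comp_goal[OF TU T2(1)])
      using T2(2) unfolding A1_def M1_def by blast
  qed
qed

lemma core:
  assumes fin: "finite A" and mb: "marked_B A M" and sides: "\<forall>S\<in>M. alg_side A S"
    and xyz: "x \<in> A" "y \<in> A" "z \<in> A" and d: "det3 x y z \<noteq> 0"
    and maxi: "\<forall>p\<in>A. \<bar>det3 x y p\<bar> \<le> \<bar>det3 x y z\<bar>"
    and G: "G \<in> M" "x \<in> G" "y \<in> G" "ldist1 G z"
  shows "\<exists>T. aff_unimod T \<and> (B1_marked (T ` A) ((`) T ` M) \<or> B2_marked (T ` A) ((`) T ` M)
        \<or> flat_border_marked (T ` A) ((`) T ` M))"
proof -
  obtain a b c where abc: "gcd a b = 1" "\<forall>q\<in>G. iaff a b c q = 0" "\<bar>iaff a b c z\<bar> = 1"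
    using ldist1E[OF G(4)] by blast
  have fx: "iaff a b c x = 0" and fy: "iaff a b c y = 0" using abc(2) G(2,3) by auto
  obtain k where k: "\<forall>w. det3 x y w = k * iaff a b c w" using det_factor[OF abc(1) fx fy] by blast
  have kz: "\<bar>det3 x y z\<bar> = \<bar>k\<bar>" using k[rule_format, of z] abc(3) by (simp add: abs_mult)
  have k0: "k \<noteq> 0" using d k by auto
  have bnd: "\<bar>iaff a b c p\<bar> \<le> 1" if "p \<in> A" for p
  proof -
    have h1: "\<bar>det3 x y p\<bar> \<le> \<bar>k\<bar>" using maxi that kz by simp
    have h2: "\<bar>det3 x y p\<bar> = \<bar>k\<bar> * \<bar>iaff a b c p\<bar>" using k[rule_format, of p] by (simp add: abs_mult)
    have "\<bar>k\<bar> * \<bar>iaff a b c p\<bar> \<le> \<bar>k\<bar> * 1" using h1 h2 by simp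
    thus ?thesis using k0 by simp
  qed
  have xy: "x \<noteq> y" using d by (auto simp: det3_def)
  have "alg_side A G" using sides G(1) by (rule bspec)
  then obtain a' b' c' where abc': "a' \<noteq> 0 \<or> b' \<noteq> 0" "\<forall>p\<in>A. 0 \<le> iaff a' b' c' p" "G = {p\<in>A. iaff a' b' c' p = 0}"
    by (rule alg_sideE)
  have gx: "iaff a' b' c' x = 0" and gy: "iaff a' b' c' y = 0" using abc'(3) G(2,3) by auto
  obtain m where m: "\<forall>p. iaff a' b' c' p = m * iaff a b c p"
    using parallel[OF abc(1) fx fy xy gx gy] by blast
  have m0: "m \<noteq> 0"
  proof
    assume "m = 0"
    hence "iaff a' b' c' (1,0) = 0" "iaff a' b' c' (0,0) = 0" "iaff a' b' c' (0,1) = 0" using m by auto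
    hence "a' = 0" "b' = 0" by (auto simp: iaff_def)
    thus False using abc'(1) by simp
  qed
  define sg :: int where "sg = (if m > 0 then 1 else -1)"
  have sg2: "sg * sg = 1" by (simp add: sg_def)
  have msg: "m * sg > 0" using m0 by (auto simp: sg_def)
  define a0 where "a0 = sg * a"
  define b0 where "b0 = sg * b"
  define c0 where "c0 = sg * c"
  have f0: "iaff a0 b0 c0 p = sg * iaff a b c p" for p by (simp add: a0_def b0_def c0_def iaff_def algebra_simps)
  have g0: "gcd a0 b0 = 1" using abc(1) by (simp add: a0_def b0_def sg_def)
  have gm: "iaff a' b' c' p = (m * sg) * iaff a0 b0 c0 p" for p
  proof -
    have "(m * sg) * iaff a0 b0 c0 p = m * (sg * sg) * iaff a b c p" by (simp add: f0 algebra_simps)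
    also have "\<dots> = m * iaff a b c p" using sg2 by simp
    also have "\<dots> = iaff a' b' c' p" using m[rule_format, of p] by simp
    finally show ?thesis by simp
  qed
  have abs0: "\<bar>iaff a0 b0 c0 p\<bar> = \<bar>iaff a b c p\<bar>" for p by (simp add: f0 abs_mult sg_def)
  have nn: "0 \<le> iaff a0 b0 c0 p" if "p \<in> A" for p
  proof -
    have "0 \<le> (m * sg) * iaff a0 b0 c0 p" using abc'(2) that gm by metis
    thus ?thesis using msg by (simp add: zero_le_mult_iff)
  qed
  have f01: "\<forall>p\<in>A. iaff a0 b0 c0 p = 0 \<or> iaff a0 b0 c0 p = 1"
  proof
    fix p assume "p \<in> A"
    hence h1: "0 \<le> iaff a0 b0 c0 p" and h2: "\<bar>iaff a b c p\<bar> \<le> 1" using nn bnd by auto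
    have "\<bar>iaff a0 b0 c0 p\<bar> \<le> 1" using h2 abs0[of p] by simp
    hence "0 \<le> iaff a0 b0 c0 p" "iaff a0 b0 c0 p \<le> 1" using h1 by auto
    thus "iaff a0 b0 c0 p = 0 \<or> iaff a0 b0 c0 p = 1" by auto
  qed
  have Geq: "G = {p\<in>A. iaff a0 b0 c0 p = 0}" unfolding abc'(3) using gm msg by auto
  have fz: "iaff a0 b0 c0 z = 1" using abs0[of z] abc(3) nn[OF xyz(3)] by simp
  show ?thesis
    by (rule core2[OF fin mb sides g0 f01 Geq G(1) G(2) G(3) xy xyz(3) fz G(4)])
qed



theorem lemma4p4:
  fixes \<alpha> :: "(int \<times> int) set" and M :: "(int \<times> int) set set"
  assumes "finite \<alpha>" and "lat_dim \<alpha> = 2" and "\<forall>S\<in>M. is_side \<alpha> S"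
  shows "marked_B \<alpha> M \<longleftrightarrow>
    (\<exists>T. aff_unimod T \<and>
       (B1_marked (T ` \<alpha>) ((`) T ` M) \<or> B2_marked (T ` \<alpha>) ((`) T ` M)
        \<or> flat_border_marked (T ` \<alpha>) ((`) T ` M)))"
proof
  have sides: "\<forall>S\<in>M. alg_side \<alpha> S" using side_alg[OF assms(1,2)] assms(3) by blast
  {
    assume mb: "marked_B \<alpha> M"
    obtain x0 y0 z0 where t0: "x0 \<in> \<alpha>" "y0 \<in> \<alpha>" "z0 \<in> \<alpha>" "det3 x0 y0 z0 \<noteq> 0"
      using dim_triangle[OF assms(1,2)] by blast
    define F where "F = (\<lambda>t::lpt \<times> lpt \<times> lpt. \<bar>det3 (fst t) (fst (snd t)) (snd (snd t))\<bar>)"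
    have finT: "finite (\<alpha> \<times> \<alpha> \<times> \<alpha>)" using assms(1) by simp
    have t0T: "(x0, y0, z0) \<in> \<alpha> \<times> \<alpha> \<times> \<alpha>" using t0 by simp
    obtain t where t: "t \<in> \<alpha> \<times> \<alpha> \<times> \<alpha>" "\<forall>t'\<in>\<alpha> \<times> \<alpha> \<times> \<alpha>. F t' \<le> F t"
      using fin_max[where f=F, OF finT t0T] by blast
    obtain x y z where xyz: "t = (x, y, z)" by (cases t) auto
    have inA: "x \<in> \<alpha>" "y \<in> \<alpha>" "z \<in> \<alpha>" using t(1) xyz by auto
    have maxi: "\<bar>det3 p q r\<bar> \<le> \<bar>det3 x y z\<bar>" if "p \<in> \<alpha>" "q \<in> \<alpha>" "r \<in> \<alpha>" for p q r
    proof -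
      have "F (p, q, r) \<le> F t" using t(2) that by simp
      thus ?thesis by (simp add: F_def xyz)
    qed
    have d: "det3 x y z \<noteq> 0"
    proof -
      have "\<bar>det3 x0 y0 z0\<bar> \<le> \<bar>det3 x y z\<bar>" using maxi t0 by blast
      thus ?thesis using t0(4) by auto
    qed
    hence "aff_indep3 x y z" by (simp add: indep_det)
    then obtain G where G: "G \<in> M" "(x \<in> G \<and> y \<in> G \<and> ldist1 G z) \<or> (x \<in> G \<and> z \<in> G \<and> ldist1 G y)
              \<or> (y \<in> G \<and> z \<in> G \<and> ldist1 G x)" using mb inA unfolding marked_B_def by blast
    show "\<exists>T. aff_unimod T \<and>
       (B1_marked (T ` \<alpha>) ((`) T ` M) \<or> B2_marked (T ` \<alpha>) ((`) T ` M)
        \<or> flat_border_marked (T ` \<alpha>) ((`) T ` M))"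
    proof -
      consider "x \<in> G" "y \<in> G" "ldist1 G z" | "x \<in> G" "z \<in> G" "ldist1 G y" | "y \<in> G" "z \<in> G" "ldist1 G x"
        using G(2) by blast
      thus ?thesis
      proof cases
        case 1
        have "\<forall>p\<in>\<alpha>. \<bar>det3 x y p\<bar> \<le> \<bar>det3 x y z\<bar>" using maxi inA by blast
        thus ?thesis using core[OF assms(1) mb sides inA(1,2,3) d _ G(1) 1] by blast
      next
        case 2
        have d2: "det3 x z y \<noteq> 0" using d det_perm1[of x z y] by simp
        have "\<forall>p\<in>\<alpha>. \<bar>det3 x z p\<bar> \<le> \<bar>det3 x z y\<bar>" using maxi inA det_perm1[of x z y] by simp
        thus ?thesis using core[OF assms(1) mb sides inA(1,3,2) d2 _ G(1) 2] by blast
      next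
        case 3
        have d3: "det3 y z x \<noteq> 0" using d det_perm2[where x=x and y=y and z=z] by simp
        have "\<forall>p\<in>\<alpha>. \<bar>det3 y z p\<bar> \<le> \<bar>det3 y z x\<bar>" using maxi inA det_perm2[where x=x and y=y and z=z] by simp
        thus ?thesis using core[OF assms(1) mb sides inA(2,3,1) d3 _ G(1) 3] by blast
      qed
    qed
  }
  {
    assume "\<exists>T. aff_unimod T \<and>
       (B1_marked (T ` \<alpha>) ((`) T ` M) \<or> B2_marked (T ` \<alpha>) ((`) T ` M)
        \<or> flat_border_marked (T ` \<alpha>) ((`) T ` M))"
    then obtain T where T: "aff_unimod T" "B1_marked (T ` \<alpha>) ((`) T ` M) \<or> B2_marked (T ` \<alpha>) ((`) T ` M)
        \<or> flat_border_marked (T ` \<alpha>) ((`) T ` M)" by blast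
    obtain T' where T': "aff_unimod T'" "\<forall>p. T' (T p) = p" using unimod_inv[OF T(1)] by blast
    have sides': "\<forall>S\<in>(`) T ` M. alg_side (T ` \<alpha>) S" using alg_side_transfer[OF T(1)] sides by blast
    have "marked_B (T ` \<alpha>) ((`) T ` M)"
      using T(2) rev_B1[OF sides'] rev_B2 rev_flat by blast
    hence mb': "marked_B (T' ` T ` \<alpha>) ((`) T' ` (`) T ` M)" by (rule marked_B_transfer[OF T'(1)])
    have inv: "T' (T p) = p" for p using T'(2) by blast
    have e1: "T' ` T ` \<alpha> = \<alpha>" by (simp add: image_image inv)
    have e2: "(`) T' ` (`) T ` M = M" by (simp add: image_image inv)
    show "marked_B \<alpha> M" using mb' unfolding e1 e2 .
  }
qed

end
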